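(* Let $n,m\ge 1$ and identify $n$-bit strings with elements of the finite field $\mathbb{F}_{2^n}$, with addition $\oplus$ (bitwise XOR) and field multiplication $*$; for a bit $d$ and $b\in\mathbb{F}_{2^n}$ let $d\cdot b$ be $0$ if $d=0$ and $b$ if $d=1$. Let $B_1,\dots,B_m$ be independent uniformly random elements of $\mathbb{F}_{2^n}$ (honest Bob's challenges), and let $R_A$ be a random variable on a finite set, independent of $(B_1,\dots,B_m)$ (Alice's preshared randomness). A classical cheating strategy of Alice is a collection of deterministic functions with values in $\mathbb{F}_{2^n}$ giving her messages $Y_1=f_1(R_A,B_1)$; for $2\le k\le m$, $Y_k^{(d)}=f_k(R_A,B_1,\dots,B_{k-2},B_k,d)$; and $Y_{m+1}^{(d)}=f_{m+1}(R_A,B_1,\dots,B_{m-1},d)$, where $d\in\{0,1\}$ is the bit she attempts to unveil. Let $H_d$ be the event $$Y^{(d)}_{m+1}=\bigoplus_{j=1}^{m}\Big(\prod_{i=j+1}^{m}B_i\Big)*Y^{(d)}_j\ \oplus\ d\cdot\prod_{i=1}^{m}B_i,$$ where $Y^{(d)}_1:=Y_1$, products are taken with $*$ and the empty product equals $1$, and let $p_d=\Pr[H_d]$. Define $c_1=2^{-n}$ and $c_m=2^{-(n+1)}+\sqrt{c_{m-1}}$ for $m\ge2$. Then for every such strategy, $p_0+p_1\le 1+c_m$; i.e. the $(m+1)$-round protocol is $\varepsilon$-binding against classical adversaries with $\varepsilon=c_m$.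
   Context: The multi-round protocol: Alice's agents share independent uniform secrets $a_1,\dots,a_m\in\mathbb{F}_{2^n}$ and Bob's agents independent uniform $b_1,\dots,b_m$. Rounds alternate between two distant locations and consecutive rounds are space-like separated. Round 1 (commit): Bob sends $x_1=b_1$, Alice returns $y_1=d\cdot x_1\oplus a_1$. Rounds $2\le k\le m$ (sustain): Bob sends $x_k=b_k$, Alice returns $y_k=(x_k*a_{k-1})\oplus a_k$. Round $m+1$ (open): Alice sends $d$ and $y_{m+1}=a_m$. Bob accepts iff $y_{m+1}=y_m\oplus b_m*y_{m-1}\oplus b_m*b_{m-1}*y_{m-2}\oplus\dots\oplus b_m*\cdots*b_2*y_1\oplus d\cdot b_m*\cdots*b_1$. The causal constraints imply that Alice's message in round $k$ cannot depend on Bob's message in round $k-1$, and her commit-phase message cannot depend on $d$; this is what the dependencies of the functions $f_k$ in the claim encode. A protocol is $\varepsilon$-binding if $p_0+p_1\le1+\varepsilon$ for all cheating strategies. *)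

theory Defs
  imports "HOL-Probability.Probability"
begin

text \<open>Field elements of GF(2^n) are modelled by an arbitrary finite field 'a with
  CARD('a) = 2^n (unique up to isomorphism); XOR is field addition.
  Bob's challenges B_1..B_m are functions b :: nat => 'a restricted to {1..m}.\<close>

definition challenge_space :: "nat \<Rightarrow> (nat \<Rightarrow> 'a::finite) set" where
  "challenge_space m = PiE {1..m} (\<lambda>_. UNIV)"

text \<open>Restriction of the challenge vector to the coordinates in S (others set to 0);
  used to encode which challenges a message may depend on.\<close>
definition restr :: "nat set \<Rightarrow> (nat \<Rightarrow> 'a::zero) \<Rightarrow> nat \<Rightarrow> 'a" where
  "restr S b = (\<lambda>i. if i \<in> S then b i else 0)"

definition bitmul :: "bool \<Rightarrow> 'a::zero \<Rightarrow> 'a" where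
  "bitmul d x = (if d then x else 0)"

definition msg :: "('r \<Rightarrow> 'a \<Rightarrow> 'a) \<Rightarrow> (nat \<Rightarrow> 'r \<Rightarrow> (nat \<Rightarrow> 'a) \<Rightarrow> bool \<Rightarrow> 'a)
    \<Rightarrow> 'r \<Rightarrow> (nat \<Rightarrow> 'a::field) \<Rightarrow> bool \<Rightarrow> nat \<Rightarrow> 'a" where
  "msg f1 f r b d k =
     (if k = 1 then f1 r (b 1) else f k r (restr ({1..k-2} \<union> {k}) b) d)"

definition accepts :: "nat \<Rightarrow> ('r \<Rightarrow> 'a \<Rightarrow> 'a) \<Rightarrow> (nat \<Rightarrow> 'r \<Rightarrow> (nat \<Rightarrow> 'a) \<Rightarrow> bool \<Rightarrow> 'a)
    \<Rightarrow> ('r \<Rightarrow> (nat \<Rightarrow> 'a) \<Rightarrow> bool \<Rightarrow> 'a) \<Rightarrow> bool \<Rightarrow> 'r \<Rightarrow> (nat \<Rightarrow> 'a::field) \<Rightarrow> bool" where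
  "accepts m f1 f g d r b \<longleftrightarrow>
     g r (restr {1..m-1} b) d =
       (\<Sum>j\<in>{1..m}. (\<Prod>i\<in>{j+1..m}. b i) * msg f1 f r b d j)
       + bitmul d (\<Prod>i\<in>{1..m}. b i)"

definition success_prob :: "nat \<Rightarrow> 'r pmf \<Rightarrow> ('r \<Rightarrow> 'a::{field,finite} \<Rightarrow> 'a) \<Rightarrow> (nat \<Rightarrow> 'r \<Rightarrow> (nat \<Rightarrow> 'a) \<Rightarrow> bool \<Rightarrow> 'a)
    \<Rightarrow> ('r \<Rightarrow> (nat \<Rightarrow> 'a) \<Rightarrow> bool \<Rightarrow> 'a) \<Rightarrow> bool \<Rightarrow> real" where
  "success_prob m R f1 f g d =
     measure_pmf.prob (pair_pmf R (pmf_of_set (challenge_space m)))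
       {(r, b). accepts m f1 f g d r b}"

fun c_bound :: "nat \<Rightarrow> nat \<Rightarrow> real" where
  "c_bound n 0 = 0"
| "c_bound n (Suc 0) = 2 powr (- real n)"
| "c_bound n (Suc (Suc k)) = 2 powr (- (real n + 1)) + sqrt (c_bound n (Suc k))"

end

theory Submission
  imports Defs
begin

definition mg :: "('a \<Rightarrow> 'a) \<Rightarrow> (nat \<Rightarrow> (nat \<Rightarrow> 'a) \<Rightarrow> bool \<Rightarrow> 'a) \<Rightarrow> (nat \<Rightarrow> 'a::field) \<Rightarrow> bool \<Rightarrow> nat \<Rightarrow> 'a" where
  "mg F1 F b d k = (if k = 1 then F1 (b 1) else F k (restr ({1..k-2} \<union> {k}) b) d)"

definition rhs :: "nat \<Rightarrow> ('a \<Rightarrow> 'a) \<Rightarrow> (nat \<Rightarrow> (nat \<Rightarrow> 'a) \<Rightarrow> bool \<Rightarrow> 'a) \<Rightarrow> (nat \<Rightarrow> 'a::field) \<Rightarrow> bool \<Rightarrow> 'a" where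
  "rhs m F1 F b d = (\<Sum>j\<in>{1..m}. (\<Prod>i\<in>{j+1..m}. b i) * mg F1 F b d j) + bitmul d (\<Prod>i\<in>{1..m}. b i)"

definition both :: "nat \<Rightarrow> ('a \<Rightarrow> 'a) \<Rightarrow> (nat \<Rightarrow> (nat \<Rightarrow> 'a) \<Rightarrow> bool \<Rightarrow> 'a) \<Rightarrow> ((nat \<Rightarrow> 'a) \<Rightarrow> bool \<Rightarrow> 'a) \<Rightarrow> (nat \<Rightarrow> 'a::field) \<Rightarrow> bool" where
  "both m F1 F G b \<longleftrightarrow> G (restr {1..m-1} b) False = rhs m F1 F b False \<and> G (restr {1..m-1} b) True = rhs m F1 F b True"

lemma accepts_rhs: "accepts m f1 f g d r b \<longleftrightarrow> g r (restr {1..m-1} b) d = rhs m (f1 r) (\<lambda>k. f k r) b d"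
  unfolding accepts_def rhs_def mg_def msg_def by simp

lemma restr_cong: "(\<And>i. i \<in> S \<Longrightarrow> b i = b' i) \<Longrightarrow> restr S b = restr S b'"
  unfolding restr_def by auto

lemma rhs_cong:
  assumes "\<And>i. i \<in> {1..m} \<Longrightarrow> b i = b' i"
  shows "rhs m F1 F b d = rhs m F1 F b' d"
proof -
  have mg: "mg F1 F b d j = mg F1 F b' d j" if "j \<in> {1..m}" for j
    unfolding mg_def using that assms
    by (auto intro!: arg_cong[where f="\<lambda>q. F j q d"] restr_cong)
  have pr: "(\<Prod>i\<in>{j..m}. b i) = (\<Prod>i\<in>{j..m}. b' i)" if "j \<ge> 1" for j
    using that assms by (intro prod.cong) auto
  show ?thesis unfolding rhs_def
    using mg pr by (intro arg_cong2[where f="(+)"] sum.cong arg_cong2[where f="(*)"]) auto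
qed

lemma rhs_Suc:
  assumes "m \<ge> 1"
  shows "rhs (Suc m) F1 F (b(Suc m := z)) d = F (Suc m) ((restr {1..m-1} b)(Suc m := z)) d + z * rhs m F1 F b d"
proof -
  let ?b = "b(Suc m := z)"
  have mg: "mg F1 F ?b d j = mg F1 F b d j" if "j \<in> {1..m}" for j
    unfolding mg_def using that
    by (auto intro!: arg_cong[where f="\<lambda>q. F j q d"] restr_cong)
  have mgl: "mg F1 F ?b d (Suc m) = F (Suc m) ((restr {1..m-1} b)(Suc m := z)) d"
    unfolding mg_def restr_def using assms by (auto intro!: arg_cong[where f="\<lambda>q. F (Suc m) q d"])
  have pr: "(\<Prod>i\<in>{j+1..Suc m}. ?b i) = z * (\<Prod>i\<in>{j+1..m}. b i)" if "j \<in> {1..m}" for j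
  proof -
    have "(\<Prod>i\<in>{j+1..Suc m}. ?b i) = (\<Prod>i\<in>{j+1..m}. ?b i) * ?b (Suc m)"
      using that by (subst prod.cl_ivl_Suc) auto
    also have "(\<Prod>i\<in>{j+1..m}. ?b i) = (\<Prod>i\<in>{j+1..m}. b i)" by (intro prod.cong) auto
    finally show ?thesis by simp
  qed
  have pr1: "(\<Prod>i\<in>{1..Suc m}. ?b i) = z * (\<Prod>i\<in>{1..m}. b i)"
  proof -
    have "(\<Prod>i\<in>{1..Suc m}. ?b i) = (\<Prod>i\<in>{1..m}. ?b i) * ?b (Suc m)"
      by (subst prod.cl_ivl_Suc) auto
    also have "(\<Prod>i\<in>{1..m}. ?b i) = (\<Prod>i\<in>{1..m}. b i)" by (intro prod.cong) auto
    finally show ?thesis by simp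
  qed
  have "rhs (Suc m) F1 F ?b d = (\<Sum>j\<in>{1..m}. (\<Prod>i\<in>{j+1..Suc m}. ?b i) * mg F1 F ?b d j)
       + mg F1 F ?b d (Suc m) + bitmul d (\<Prod>i\<in>{1..Suc m}. ?b i)"
    unfolding rhs_def by (subst sum.cl_ivl_Suc) simp
  also have "(\<Sum>j\<in>{1..m}. (\<Prod>i\<in>{j+1..Suc m}. ?b i) * mg F1 F ?b d j)
      = z * (\<Sum>j\<in>{1..m}. (\<Prod>i\<in>{j+1..m}. b i) * mg F1 F b d j)"
    unfolding sum_distrib_left using mg pr by (intro sum.cong) (auto simp: mult.assoc)
  finally show ?thesis unfolding mgl pr1 rhs_def bitmul_def by (simp add: algebra_simps)
qed

lemma diff_eq_aux:
  fixes G G' Y z s s' :: "'a::field"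
  assumes "G = Y + z * s" "G' = Y + z * s'"
  shows "z * (s - s') = G - G'"
  using assms by (simp add: right_diff_distrib)

lemma card_le_one_common:
  fixes S0 S1 G0 G1 Y0 Y1 :: "'a::{field,finite} \<Rightarrow> 'a"
  assumes "(S0 x, S1 x) \<noteq> (S0 x', S1 x')"
  shows "card {z. (G0 x = Y0 z + z * S0 x \<and> G1 x = Y1 z + z * S1 x) \<and>
                  (G0 x' = Y0 z + z * S0 x' \<and> G1 x' = Y1 z + z * S1 x')} \<le> 1"
proof -
  let ?A = "{z. (G0 x = Y0 z + z * S0 x \<and> G1 x = Y1 z + z * S1 x) \<and>
                  (G0 x' = Y0 z + z * S0 x' \<and> G1 x' = Y1 z + z * S1 x')}"
  have e0: "z * (S0 x - S0 x') = G0 x - G0 x'" if "z \<in> ?A" for z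
    using that diff_eq_aux[of "G0 x" "Y0 z" z "S0 x" "G0 x'" "S0 x'"] diff_eq_aux[of "G1 x" "Y1 z" z "S1 x" "G1 x'" "S1 x'"] by auto
  have e1: "z * (S1 x - S1 x') = G1 x - G1 x'" if "z \<in> ?A" for z
    using that diff_eq_aux[of "G0 x" "Y0 z" z "S0 x" "G0 x'" "S0 x'"] diff_eq_aux[of "G1 x" "Y1 z" z "S1 x" "G1 x'" "S1 x'"] by auto
  have "z1 = z2" if h: "z1 \<in> ?A" "z2 \<in> ?A" for z1 z2
  proof (cases "S0 x = S0 x'")
    case True
    then have ne: "S1 x - S1 x' \<noteq> 0" using assms by auto
    have "z1 * (S1 x - S1 x') = z2 * (S1 x - S1 x')" using e1[OF h(1)] e1[OF h(2)] by simp
    then show ?thesis using ne by simp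
  next
    case False
    then have ne: "S0 x - S0 x' \<noteq> 0" by auto
    have "z1 * (S0 x - S0 x') = z2 * (S0 x - S0 x')" using e0[OF h(1)] e0[OF h(2)] by simp
    then show ?thesis using ne by simp
  qed
  then have "card ?A \<le> Suc 0"
    by (intro iffD2[OF card_le_Suc0_iff_eq] finite ballI) blast
  then show ?thesis by simp
qed

lemma quad_bound:
  fixes D N M :: real
  assumes "D\<^sup>2 \<le> N * D + N\<^sup>2 * (N - 1) * M" "1 \<le> M" "1 \<le> N"
  shows "D \<le> N / 2 + N * sqrt (N * M)"
proof -
  have "(D - N/2)\<^sup>2 \<le> N\<^sup>2 * (N - 1) * M + N\<^sup>2 / 4"
    using assms(1) by (simp add: power2_eq_square algebra_simps)
  also have "\<dots> \<le> N\<^sup>2 * N * M"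
  proof -
    have "N\<^sup>2 / 4 \<le> N\<^sup>2 * M" using assms by (simp add: power2_eq_square)
    then show ?thesis by (simp add: algebra_simps)
  qed
  finally have "D - N/2 \<le> sqrt (N\<^sup>2 * (N * M))"
    by (intro real_le_rsqrt) (simp add: mult.assoc)
  also have "sqrt (N\<^sup>2 * (N * M)) = N * sqrt (N * M)"
    using assms by (simp add: real_sqrt_mult)
  finally have "D - N/2 \<le> N * sqrt (N * M)" .
  then show ?thesis by simp
qed

lemma incidence:
  fixes S0 S1 G0 G1 Y0 Y1 :: "'a::{field,finite} \<Rightarrow> 'a"
  defines "E \<equiv> \<lambda>x z. G0 x = Y0 z + z * S0 x \<and> G1 x = Y1 z + z * S1 x"
  assumes M: "\<And>v0 v1. card {x. S0 x = v0 \<and> S1 x = v1} \<le> M" and M1: "1 \<le> M"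
  shows "(\<Sum>x\<in>UNIV. \<Sum>z\<in>UNIV. if E x z then 1 else 0 :: real)
      \<le> real CARD('a) / 2 + real CARD('a) * sqrt (real CARD('a) * real M)"
proof -
  define N where "N = real CARD('a)"
  define ind where "ind x z = (if E x z then 1 else 0 :: real)" for x z
  define D where "D = (\<Sum>x\<in>UNIV. \<Sum>z\<in>UNIV. ind x z)"
  define deg where "deg z = (\<Sum>x\<in>UNIV. ind x z)" for z
  define rd where "rd x = (\<Sum>z\<in>UNIV. ind x z)" for x
  define cls where "cls x = real (card {x'. S0 x' = S0 x \<and> S1 x' = S1 x})" for x
  have N1: "1 \<le> N" unfolding N_def by (simp add: Suc_le_eq)
  have Ddeg: "D = (\<Sum>z\<in>UNIV. deg z)" unfolding D_def deg_def by (rule sum.swap)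
  have Drd: "D = (\<Sum>x\<in>UNIV. rd x)" unfolding D_def rd_def by simp
  have sq: "(\<Sum>z\<in>UNIV. (deg z)\<^sup>2) = (\<Sum>x\<in>UNIV. \<Sum>x'\<in>UNIV. \<Sum>z\<in>UNIV. ind x z * ind x' z)"
  proof -
    have "(\<Sum>z\<in>UNIV. (deg z)\<^sup>2) = (\<Sum>z\<in>UNIV. \<Sum>x\<in>UNIV. \<Sum>x'\<in>UNIV. ind x z * ind x' z)"
      unfolding deg_def power2_eq_square sum_product by simp
    also have "\<dots> = (\<Sum>x\<in>UNIV. \<Sum>z\<in>UNIV. \<Sum>x'\<in>UNIV. ind x z * ind x' z)"
      by (rule sum.swap)
    also have "\<dots> = (\<Sum>x\<in>UNIV. \<Sum>x'\<in>UNIV. \<Sum>z\<in>UNIV. ind x z * ind x' z)"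
      by (intro sum.cong refl sum.swap)
    finally show ?thesis .
  qed
  define h where "h x x' = (if (S0 x', S1 x') = (S0 x, S1 x) then N else 1)" for x x'
  have pair: "(\<Sum>z\<in>UNIV. ind x z * ind x' z) \<le> (if x' = x then rd x else h x x')" for x x'
  proof (cases "x' = x")
    case True
    then show ?thesis unfolding rd_def ind_def by (simp, intro sum_mono, simp)
  next
    case False
    have eq: "(\<Sum>z\<in>UNIV. ind x z * ind x' z) = real (card {z. E x z \<and> E x' z})"
    proof -
      have "(\<Sum>z\<in>UNIV. ind x z * ind x' z) = (\<Sum>z\<in>UNIV. if E x z \<and> E x' z then 1 else 0)"
        unfolding ind_def by (intro sum.cong) auto
      also have "\<dots> = real (card {z. E x z \<and> E x' z})" by (simp add: sum.If_cases)
      finally show ?thesis .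
    qed
    show ?thesis
    proof (cases "(S0 x', S1 x') = (S0 x, S1 x)")
      case True
      have "card {z. E x z \<and> E x' z} \<le> CARD('a)" by (rule card_mono) auto
      then show ?thesis using False True unfolding eq h_def N_def by simp
    next
      case F2: False
      have "card {z. E x z \<and> E x' z} \<le> 1" unfolding E_def
        by (rule card_le_one_common) (use F2 in auto)
      then show ?thesis using False F2 unfolding eq h_def by auto
    qed
  qed
  have hsum: "(\<Sum>x'\<in>UNIV. h x x') = N + (N - 1) * cls x" for x
  proof -
    have "(\<Sum>x'\<in>UNIV. h x x') = (\<Sum>x'\<in>UNIV. 1 + (if (S0 x', S1 x') = (S0 x, S1 x) then N - 1 else 0))"
      unfolding h_def by (intro sum.cong) auto
    also have "\<dots> = N + (N - 1) * cls x"
      unfolding sum.distrib cls_def N_def by (simp add: sum.If_cases)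
    finally show ?thesis .
  qed
  have row: "(\<Sum>x'\<in>UNIV. \<Sum>z\<in>UNIV. ind x z * ind x' z) \<le> rd x + (N - 1) * M" for x
  proof -
    have "(\<Sum>x'\<in>UNIV. \<Sum>z\<in>UNIV. ind x z * ind x' z) \<le> (\<Sum>x'\<in>UNIV. (if x' = x then rd x else h x x'))"
      by (intro sum_mono pair)
    also have "\<dots> = rd x + (\<Sum>x'\<in>UNIV - {x}. h x x')"
      by (subst sum.remove[of _ x]) auto
    also have "(\<Sum>x'\<in>UNIV - {x}. h x x') = (\<Sum>x'\<in>UNIV. h x x') - h x x"
      by (simp add: sum_diff1)
    also have "\<dots> = (N - 1) * cls x" unfolding hsum by (simp add: h_def)
    also have "cls x \<le> M" unfolding cls_def using M by simp
    finally show ?thesis using N1 by (simp add: mult_left_mono)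
  qed
  have S2: "(\<Sum>z\<in>UNIV. (deg z)\<^sup>2) \<le> D + N * ((N - 1) * M)"
  proof -
    have "(\<Sum>z\<in>UNIV. (deg z)\<^sup>2) \<le> (\<Sum>x\<in>UNIV. rd x + (N - 1) * M)"
      unfolding sq by (intro sum_mono row)
    also have "\<dots> = D + N * ((N - 1) * M)" unfolding sum.distrib Drd N_def by simp
    finally show ?thesis .
  qed
  have CS: "D\<^sup>2 \<le> N * (\<Sum>z\<in>UNIV. (deg z)\<^sup>2)"
    using Cauchy_Schwarz_ineq_sum[of deg "\<lambda>_. 1" UNIV] unfolding Ddeg N_def
    by (simp add: mult.commute)
  have "D\<^sup>2 \<le> N * D + N\<^sup>2 * (N - 1) * M"
    using order_trans[OF CS mult_left_mono[OF S2]] N1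
    by (simp add: power2_eq_square algebra_simps)
  from quad_bound[OF this _ N1] M1 have "D \<le> N / 2 + N * sqrt (N * M)" by simp
  then show ?thesis unfolding D_def ind_def N_def .
qed

lemma CS_Suc_sum:
  "(\<Sum>b\<in>(challenge_space (Suc m) :: (nat \<Rightarrow> 'a::finite) set). h b)
     = (\<Sum>z\<in>UNIV. \<Sum>b\<in>(challenge_space m :: (nat \<Rightarrow> 'a) set). h (b(Suc m := z)))"
proof -
  have eq: "(challenge_space (Suc m) :: (nat \<Rightarrow> 'a) set)
      = (\<lambda>(y, g). g(Suc m := y)) ` ((\<lambda>_. UNIV) (Suc m) \<times> (challenge_space m :: (nat \<Rightarrow> 'a) set))"
    unfolding challenge_space_def by (simp add: atLeastAtMostSuc_conv PiE_insert_eq)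
  have inj: "inj_on (\<lambda>(y, g). g(Suc m := y)) ((\<lambda>_. UNIV :: 'a set) (Suc m) \<times> (challenge_space m :: (nat \<Rightarrow> 'a) set))"
    unfolding challenge_space_def by (rule inj_combinator) simp
  show ?thesis
    unfolding eq sum.reindex[OF inj] by (simp add: sum.cartesian_product split_def)
qed

lemma card_CS: "card (challenge_space m :: (nat \<Rightarrow> 'a::finite) set) = CARD('a) ^ m"
  unfolding challenge_space_def by (simp add: card_PiE)

lemma finite_CS: "finite (challenge_space m :: (nat \<Rightarrow> 'a::finite) set)"
  unfolding challenge_space_def by (simp add: finite_PiE)

lemma cnt_sum: "finite A \<Longrightarrow> real (card {b\<in>A. P b}) = (\<Sum>b\<in>A. if P b then 1 else 0)"
  by (simp add: sum.If_cases Int_def conj_commute)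

lemma base_count:
  fixes F1 :: "'a::{field,finite} \<Rightarrow> 'a"
  shows "card {b \<in> (challenge_space (Suc 0) :: (nat \<Rightarrow> 'a) set). both (Suc 0) F1 F G b} \<le> 1"
proof -
  let ?A = "{b \<in> (challenge_space (Suc 0) :: (nat \<Rightarrow> 'a) set). both (Suc 0) F1 F G b}"
  have r: "rhs (Suc 0) F1 F b d = F1 (b 1) + bitmul d (b 1)" for b :: "nat \<Rightarrow> 'a" and d
    unfolding rhs_def mg_def by simp
  have key: "b 1 = G (\<lambda>_. 0) True - G (\<lambda>_. 0) False" if "b \<in> ?A" for b
  proof -
    have rr: "restr {1..Suc 0 - 1} b = (\<lambda>_. 0)" by (simp add: restr_def)
    from that have "G (\<lambda>_. 0) False = F1 (b 1)" "G (\<lambda>_. 0) True = F1 (b 1) + b 1"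
      unfolding both_def rr r bitmul_def by (auto simp: restr_def)
    then show ?thesis by simp
  qed
  have "b = b'" if "b \<in> ?A" "b' \<in> ?A" for b b'
  proof (rule PiE_ext)
    show "b \<in> PiE {1..Suc 0} (\<lambda>_. UNIV)" "b' \<in> PiE {1..Suc 0} (\<lambda>_. UNIV)"
      using that unfolding challenge_space_def by auto
    show "b i = b' i" if "i \<in> {1..Suc 0}" for i
      using that key[OF \<open>b \<in> ?A\<close>] key[OF \<open>b' \<in> ?A\<close>] by auto
  qed
  then have "card ?A \<le> Suc 0"
    by (intro iffD2[OF card_le_Suc0_iff_eq] ballI) (auto simp: finite_CS)
  then show ?thesis by simp
qed

lemma step_count:
  fixes F1 :: "'a::{field,finite} \<Rightarrow> 'a" and F G and c :: real
  assumes IH: "\<And>F1 F G. real (card {b \<in> (challenge_space (Suc k) :: (nat \<Rightarrow> 'a) set). both (Suc k) F1 F G b})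
        \<le> c * real CARD('a) ^ Suc k"
    and c0: "0 \<le> c"
  shows "real (card {b \<in> (challenge_space (Suc (Suc k)) :: (nat \<Rightarrow> 'a) set). both (Suc (Suc k)) F1 F G b})
        \<le> (1 / (2 * real CARD('a)) + sqrt c) * real CARD('a) ^ Suc (Suc k)"
proof -
  define N where "N = real CARD('a)"
  have N1: "1 \<le> N" unfolding N_def by (simp add: Suc_le_eq)
  define m' where "m' = Suc k"
  define m where "m = Suc m'"
  define P where "P = (challenge_space k :: (nat \<Rightarrow> 'a) set)"
  have finP: "finite P" unfolding P_def by (rule finite_CS)
  have cardP: "real (card P) = N ^ k" unfolding P_def N_def card_CS by simp
  define S where "S d p x = rhs m' F1 F (p(m' := x)) d" for d p x
  define Gd where "Gd d p x = G (restr {1..m'} (p(m' := x))) d" for d p x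
  define Yd where "Yd d p z = F m ((restr {1..k} p)(m := z)) d" for d p z
  define E where "E p x z \<longleftrightarrow> (Gd False p x = Yd False p z + z * S False p x \<and>
                               Gd True p x = Yd True p z + z * S True p x)" for p x z
  have bothE: "both m F1 F G ((p(m' := x))(m := z)) \<longleftrightarrow> E p x z" for p x z
  proof -
    have r1: "restr {1..m - 1} ((p(m' := x))(m := z)) = restr {1..m'} (p(m' := x))"
      unfolding m_def diff_Suc_1 by (intro restr_cong) auto
    have r2: "restr {1..m' - 1} (p(m' := x)) = restr {1..k} p"
      unfolding m'_def diff_Suc_1 by (intro restr_cong) auto
    have "rhs m F1 F ((p(m' := x))(m := z)) d = Yd d p z + z * S d p x" for d
      unfolding m_def Yd_def S_def using rhs_Suc[of m' F1 F "p(m' := x)" z d] r2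
      by (simp add: m'_def m_def)
    then show ?thesis unfolding both_def E_def r1 Gd_def by auto
  qed
  define hc where "hc q v = card {x. (S False q x, S True q x) = v}" for q v
  have hc_restr: "hc (restr {1..k} p) = hc p" for p
  proof -
    have "S d (restr {1..k} p) x = S d p x" for d x
      unfolding S_def by (rule rhs_cong) (auto simp: restr_def m'_def)
    then show ?thesis unfolding hc_def by simp
  qed
  have exV: "\<exists>v. \<forall>w. hc q w \<le> hc q v" for q
  proof -
    have "Max (range (hc q)) \<in> range (hc q)" by (intro Max_in) auto
    then obtain v where "hc q v = Max (range (hc q))" by (metis imageE)
    then show ?thesis by (metis Max_ge finite finite_imageI rangeI)
  qed
  define V where "V q = (SOME v. \<forall>w. hc q w \<le> hc q v)" for q
  have Vmax: "hc q w \<le> hc q (V q)" for q w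
    unfolding V_def using someI_ex[OF exV[of q]] by blast
  define Mp where "Mp p = hc p (V (restr {1..k} p))" for p
  have Mp_ge: "card {x. S False p x = v0 \<and> S True p x = v1} \<le> Mp p" for p v0 v1
  proof -
    have "card {x. S False p x = v0 \<and> S True p x = v1} = hc p (v0, v1)" unfolding hc_def by simp
    also have "\<dots> = hc (restr {1..k} p) (v0, v1)" unfolding hc_restr ..
    also have "\<dots> \<le> hc (restr {1..k} p) (V (restr {1..k} p))" by (rule Vmax)
    finally show ?thesis unfolding Mp_def hc_restr .
  qed
  have Mp1: "1 \<le> Mp p" for p
  proof -
    have "card {x. S False p x = S False p undefined \<and> S True p x = S True p undefined} \<ge> 1"
      by (simp add: Suc_le_eq card_gt_0_iff) blast
    then show ?thesis using Mp_ge[of p] by (meson order_trans)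
  qed
  have per: "(\<Sum>x\<in>UNIV. \<Sum>z\<in>UNIV. if E p x z then 1 else 0 :: real) \<le> N / 2 + N * sqrt (N * real (Mp p))" for p
    unfolding E_def N_def by (rule incidence[OF Mp_ge Mp1])
  have cnt_m: "real (card {b \<in> (challenge_space m :: (nat \<Rightarrow> 'a) set). both m F1 F G b})
      = (\<Sum>p\<in>P. \<Sum>x\<in>UNIV. \<Sum>z\<in>UNIV. if E p x z then 1 else 0)"
  proof -
    have "real (card {b \<in> (challenge_space m :: (nat \<Rightarrow> 'a) set). both m F1 F G b})
        = (\<Sum>b\<in>(challenge_space m :: (nat \<Rightarrow> 'a) set). if both m F1 F G b then 1 else 0)"
      by (rule cnt_sum[OF finite_CS])
    also have "\<dots> = (\<Sum>z\<in>UNIV. \<Sum>x\<in>UNIV. \<Sum>p\<in>P. if both m F1 F G ((p(m' := x))(m := z)) then 1 else 0)"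
      unfolding m_def m'_def P_def CS_Suc_sum ..
    also have "\<dots> = (\<Sum>z\<in>UNIV. \<Sum>x\<in>UNIV. \<Sum>p\<in>P. if E p x z then 1 else 0)"
      unfolding bothE ..
    also have "\<dots> = (\<Sum>z\<in>UNIV. \<Sum>p\<in>P. \<Sum>x\<in>UNIV. if E p x z then 1 else 0)"
      by (intro sum.cong refl sum.swap)
    also have "\<dots> = (\<Sum>p\<in>P. \<Sum>z\<in>UNIV. \<Sum>x\<in>UNIV. if E p x z then 1 else 0)"
      by (rule sum.swap)
    also have "\<dots> = (\<Sum>p\<in>P. \<Sum>x\<in>UNIV. \<Sum>z\<in>UNIV. if E p x z then 1 else 0)"
      by (intro sum.cong refl sum.swap)
    finally show ?thesis .
  qed
  (* IH applied to the optimal opening *)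
  define G' where "G' q d = (if d then snd (V q) else fst (V q))" for q and d :: bool
  have bothG': "both m' F1 F G' (p(m' := x)) \<longleftrightarrow> (S False p x, S True p x) = V (restr {1..k} p)" for p x
  proof -
    have r2: "restr {1..m' - 1} (p(m' := x)) = restr {1..k} p"
      unfolding m'_def diff_Suc_1 by (intro restr_cong) auto
    show ?thesis unfolding both_def r2 G'_def S_def by (cases "V (restr {1..k} p)") auto
  qed
  have sumM: "(\<Sum>p\<in>P. real (Mp p)) \<le> c * N ^ m'"
  proof -
    have "(\<Sum>p\<in>P. real (Mp p)) = (\<Sum>p\<in>P. \<Sum>x\<in>UNIV. if (S False p x, S True p x) = V (restr {1..k} p) then 1 else 0)"
    proof (intro sum.cong refl)
      fix p
      have "real (Mp p) = real (card {x \<in> UNIV. (S False p x, S True p x) = V (restr {1..k} p)})"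
        unfolding Mp_def hc_def by simp
      also have "\<dots> = (\<Sum>x\<in>UNIV. if (S False p x, S True p x) = V (restr {1..k} p) then 1 else 0)"
        by (rule cnt_sum) simp
      finally show "real (Mp p) = \<dots>" .
    qed
    also have "\<dots> = (\<Sum>x\<in>UNIV. \<Sum>p\<in>P. if both m' F1 F G' (p(m' := x)) then 1 else 0)"
      unfolding bothG' by (rule sum.swap)
    also have "\<dots> = (\<Sum>b\<in>(challenge_space m' :: (nat \<Rightarrow> 'a) set). if both m' F1 F G' b then 1 else 0)"
      unfolding m'_def P_def CS_Suc_sum ..
    also have "\<dots> = real (card {b \<in> (challenge_space m' :: (nat \<Rightarrow> 'a) set). both m' F1 F G' b})"
      by (rule cnt_sum[OF finite_CS, symmetric])
    also have "\<dots> \<le> c * N ^ m'" unfolding m'_def N_def by (rule IH)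
    finally show ?thesis .
  qed
  have csq: "(\<Sum>p\<in>P. sqrt (N * real (Mp p)))\<^sup>2 \<le> (\<Sum>p\<in>P. N * real (Mp p)) * N ^ k"
    using Cauchy_Schwarz_ineq_sum[of "\<lambda>p. sqrt (N * real (Mp p))" "\<lambda>_. 1" P] N1 cardP
    by simp
  also have "\<dots> \<le> (N * (c * N ^ m')) * N ^ k"
    using sumM N1 by (simp add: sum_distrib_left[symmetric])
  also have "\<dots> = c * (N ^ m') ^ 2" unfolding m'_def by (simp add: power2_eq_square algebra_simps)
  finally have "(\<Sum>p\<in>P. sqrt (N * real (Mp p))) \<le> sqrt (c * (N ^ m') ^ 2)"
    by (rule real_le_rsqrt)
  also have "\<dots> = sqrt c * N ^ m'" using N1 by (simp add: real_sqrt_mult)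
  finally have sqb: "(\<Sum>p\<in>P. sqrt (N * real (Mp p))) \<le> sqrt c * N ^ m'" .
  have "real (card {b \<in> (challenge_space m :: (nat \<Rightarrow> 'a) set). both m F1 F G b})
      \<le> (\<Sum>p\<in>P. N / 2 + N * sqrt (N * real (Mp p)))"
    unfolding cnt_m by (intro sum_mono per)
  also have "\<dots> = N ^ k * (N / 2) + N * (\<Sum>p\<in>P. sqrt (N * real (Mp p)))"
    by (simp add: sum.distrib sum_distrib_left cardP)
  also have "\<dots> \<le> N ^ k * (N / 2) + N * (sqrt c * N ^ m')"
    using sqb N1 by simp
  also have "\<dots> = (1 / (2 * N) + sqrt c) * N ^ Suc (Suc k)"
    using N1 unfolding m'_def by (simp add: field_simps)
  finally show ?thesis unfolding m_def m'_def N_def .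
qed

lemma c_bound_nonneg: "0 \<le> c_bound n m"
  by (induction n m rule: c_bound.induct) auto

lemma pw1: "2 powr (- real n) * 2 ^ n = (1::real)"
  by (simp add: powr_minus powr_realpow)

lemma pw2: "2 powr (- (real n + 1)) = 1 / (2 * (2::real) ^ n)"
proof -
  have a: "(2::real) powr real n = 2 ^ n" by (rule powr_realpow) simp
  have "2 powr (- (real n + 1)) = inverse ((2::real) powr real n * 2 powr 1)"
    by (simp only: powr_minus powr_add)
  also have "\<dots> = inverse (2 ^ n * 2)" by (simp only: a powr_one_gt_zero_iff powr_one)
  also have "\<dots> = 1 / (2 * (2::real) ^ n)" by (simp only: inverse_eq_divide mult.commute[of "(2::real) ^ n" 2])
  finally show ?thesis .
qed

lemma count_bound:
  fixes F1 :: "'a::{field,finite} \<Rightarrow> 'a"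
  assumes card: "CARD('a) = 2 ^ n"
  shows "real (card {b \<in> (challenge_space (Suc k) :: (nat \<Rightarrow> 'a) set). both (Suc k) F1 F G b})
        \<le> c_bound n (Suc k) * real CARD('a) ^ Suc k"
proof (induction k arbitrary: F1 F G)
  case 0
  have cr: "real CARD('a) = 2 ^ n" unfolding card by (simp only: of_nat_power of_nat_numeral)
  have r: "c_bound n (Suc 0) * real CARD('a) ^ Suc 0 = 1"
    by (simp only: c_bound.simps power_Suc power_0 mult_1_right cr pw1)
  have "real (card {b \<in> (challenge_space (Suc 0) :: (nat \<Rightarrow> 'a) set). both (Suc 0) F1 F G b}) \<le> 1"
    using base_count[of F1 F G] by (metis of_nat_1 of_nat_le_iff)
  then show ?case unfolding r .
next
  case (Suc k)
  have cr: "real CARD('a) = 2 ^ n" unfolding card by (simp only: of_nat_power of_nat_numeral)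
  have e: "2 powr (- (real n + 1)) = 1 / (2 * real CARD('a))"
    unfolding cr by (rule pw2)
  show ?case
    using step_count[of k "c_bound n (Suc k)" F1 F G, OF Suc.IH c_bound_nonneg]
    by (simp only: c_bound.simps e)
qed

lemma prob_bound:
  fixes R :: "'r pmf" and U :: "'b pmf" and Q :: "'r \<Rightarrow> 'b \<Rightarrow> bool" and C :: "'b set"
  assumes fin: "finite (set_pmf R)" and finC: "finite C" and Cne: "C \<noteq> {}"
    and bnd: "\<And>r. real (card {b \<in> C. Q r b}) \<le> c * real (card C)"
  shows "measure_pmf.prob (pair_pmf R (pmf_of_set C)) {(r, b). Q r b} \<le> c"
proof -
  let ?M = "pair_pmf R (pmf_of_set C)"
  let ?X = "{(r, b). Q r b}"
  have setM: "set_pmf ?M = set_pmf R \<times> C" using finC Cne by simp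
  have "measure_pmf.prob ?M ?X = measure_pmf.prob ?M (?X \<inter> set_pmf ?M)"
    by (rule measure_Int_set_pmf[symmetric])
  also have "?X \<inter> set_pmf ?M = (SIGMA r:set_pmf R. {b \<in> C. Q r b})" unfolding setM by auto
  also have "measure_pmf.prob ?M (SIGMA r:set_pmf R. {b \<in> C. Q r b})
      = sum (pmf ?M) (SIGMA r:set_pmf R. {b \<in> C. Q r b})"
    using fin finC by (intro measure_measure_pmf_finite) auto
  also have "\<dots> = (\<Sum>r\<in>set_pmf R. \<Sum>b\<in>{b \<in> C. Q r b}. pmf ?M (r, b))"
    using fin finC by (subst sum.Sigma) auto
  also have "\<dots> = (\<Sum>r\<in>set_pmf R. pmf R r * (real (card {b \<in> C. Q r b}) / real (card C)))"
  proof (intro sum.cong refl)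
    fix r
    have "(\<Sum>b\<in>{b \<in> C. Q r b}. pmf ?M (r, b)) = (\<Sum>b\<in>{b \<in> C. Q r b}. pmf R r / real (card C))"
      using finC Cne by (intro sum.cong refl) (auto simp: pmf_pair)
    then show "(\<Sum>b\<in>{b \<in> C. Q r b}. pmf ?M (r, b)) = pmf R r * (real (card {b \<in> C. Q r b}) / real (card C))"
      by simp
  qed
  also have "\<dots> \<le> (\<Sum>r\<in>set_pmf R. pmf R r * c)"
  proof (intro sum_mono mult_left_mono)
    fix r
    have "0 < real (card C)" using finC Cne by (simp add: card_gt_0_iff)
    then show "real (card {b \<in> C. Q r b}) / real (card C) \<le> c"
      using bnd[of r] by (simp add: divide_le_eq)
  qed simp
  also have "\<dots> = c" using fin by (simp add: sum_distrib_right[symmetric] sum_pmf_eq_1)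
  finally show ?thesis .
qed

theorem mainTheorem2:
  fixes n m :: nat
    and R :: "'r pmf"
    and f1 :: "'r \<Rightarrow> 'a::{field,finite} \<Rightarrow> 'a"
    and f :: "nat \<Rightarrow> 'r \<Rightarrow> (nat \<Rightarrow> 'a) \<Rightarrow> bool \<Rightarrow> 'a"
    and g :: "'r \<Rightarrow> (nat \<Rightarrow> 'a) \<Rightarrow> bool \<Rightarrow> 'a"
  assumes "n \<ge> 1" and "m \<ge> 1"
    and "CARD('a) = 2 ^ n"
    and "finite (set_pmf R)"
  shows "success_prob m R f1 f g False + success_prob m R f1 f g True \<le> 1 + c_bound n m"
proof -
  obtain k where k: "m = Suc k" using assms(2) by (cases m) auto
  let ?C = "challenge_space m :: (nat \<Rightarrow> 'a) set"
  let ?M = "pair_pmf R (pmf_of_set ?C)"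
  define A where "A d = {(r, b). accepts m f1 f g d r b}" for d
  have Cne: "?C \<noteq> {}" unfolding challenge_space_def by (simp add: PiE_eq_empty_iff)
  have "measure_pmf.prob ?M (A False) + measure_pmf.prob ?M (A True)
      = measure_pmf.prob ?M (A False \<union> A True) + measure_pmf.prob ?M (A False \<inter> A True)"
  proof -
    have "measure_pmf.prob ?M (A False \<union> A True) = measure_pmf.prob ?M (A False) + measure_pmf.prob ?M (A True - A False)"
      by (rule measure_pmf.finite_measure_Union') auto
    moreover have "measure_pmf.prob ?M (A True) = measure_pmf.prob ?M (A True - A False) + measure_pmf.prob ?M (A False \<inter> A True)"
    proof -
      have "A True = (A True - A False) \<union> (A False \<inter> A True)" by auto
      then have "measure_pmf.prob ?M (A True) = measure_pmf.prob ?M ((A True - A False) \<union> (A False \<inter> A True))" by simp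
      also have "\<dots> = measure_pmf.prob ?M (A True - A False) + measure_pmf.prob ?M (A False \<inter> A True)"
        by (rule measure_pmf.finite_measure_Union) auto
      finally show ?thesis .
    qed
    ultimately show ?thesis by simp
  qed
  also have "\<dots> \<le> 1 + c_bound n m"
  proof (rule add_mono)
    show "measure_pmf.prob ?M (A False \<union> A True) \<le> 1" by simp
    have eqA: "A False \<inter> A True = {(r, b). both m (f1 r) (\<lambda>k. f k r) (g r) b}"
      unfolding A_def both_def accepts_rhs by auto
    show "measure_pmf.prob ?M (A False \<inter> A True) \<le> c_bound n m"
      unfolding eqA
    proof (rule prob_bound[OF assms(4) finite_CS Cne])
      fix r
      show "real (card {b \<in> ?C. both m (f1 r) (\<lambda>k. f k r) (g r) b}) \<le> c_bound n m * real (card ?C)"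
        using count_bound[OF assms(3), of k "f1 r" "\<lambda>k. f k r" "g r"] unfolding k card_CS by simp
    qed
  qed
  finally show ?thesis unfolding success_prob_def A_def .
qed

end
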